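(* If $S,T\in \mathcal{B}_{A}(\mathcal{H})$, then $$d\omega _{A_{0}}\left( \begin{bmatrix} S & 0 \\ 0 & T \end{bmatrix} \right) =\max \left\{ d\omega _{A}\left( S\right) ,d\omega _{A}\left( T\right) \right\}.$$
   Context: $\mathcal{H}$ is a complex Hilbert space and $A\in\mathcal{B}(\mathcal{H})$ is a positive operator; $\langle x,z\rangle_A=\langle Ax,z\rangle$ and $\|z\|_A=\|A^{1/2}z\|$. $\mathcal{B}_A(\mathcal{H})$ denotes the set of bounded operators $S$ on $\mathcal{H}$ admitting an $A$-adjoint, i.e. with $\mathcal{R}(S^*A)\subseteq\mathcal{R}(A)$. The $A$-Davis-Wielandt radius is $d\omega_A(S)=\sup\{(|\langle Sz,z\rangle_A|^2+\|Sz\|_A^4)^{1/2}: z\in\mathcal{H},\ \|z\|_A=1\}$. $A_0=\begin{bmatrix} A&0\\0&A\end{bmatrix}$ is the positive operator on $\mathcal{H}\oplus\mathcal{H}$, inducing $\langle x,z\rangle_{A_0}=\langle x_1,z_1\rangle_A+\langle x_2,z_2\rangle_A$ for $x=(x_1,x_2)$, $z=(z_1,z_2)$, and $d\omega_{A_0}$ is the corresponding $A_0$-Davis-Wielandt radius on $\mathcal{H}\oplus\mathcal{H}$. *)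

theory Defs
  imports "HOL-Analysis.Analysis"
begin

text \<open>The inner product is linear in the first argument.\<close>

class complex_vector_space = real_vector +
  fixes scaleC :: "complex \<Rightarrow> 'a \<Rightarrow> 'a" (infixr "*\<^sub>C" 75)
  assumes scaleC_add_right: "a *\<^sub>C (x + y) = a *\<^sub>C x + a *\<^sub>C y"
    and scaleC_add_left: "(a + b) *\<^sub>C x = a *\<^sub>C x + b *\<^sub>C x"
    and scaleC_scaleC: "a *\<^sub>C (b *\<^sub>C x) = (a * b) *\<^sub>C x"
    and scaleC_one: "1 *\<^sub>C x = x"
    and scaleC_of_real: "complex_of_real r *\<^sub>C x = r *\<^sub>R x"

class complex_inner = complex_vector_space + real_normed_vector +
  fixes cinner :: "'a \<Rightarrow> 'a \<Rightarrow> complex"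
  assumes cinner_commute: "cinner x y = cnj (cinner y x)"
    and cinner_add_left: "cinner (x + y) z = cinner x z + cinner y z"
    and cinner_scaleC_left: "cinner (a *\<^sub>C x) y = a * cinner x y"
    and cinner_self_norm: "cinner x x = complex_of_real ((norm x)\<^sup>2)"

class complex_hilbert = complex_inner + complete_space

definition bounded_clinear :: "('a::complex_hilbert \<Rightarrow> 'a) \<Rightarrow> bool" where
  "bounded_clinear f \<longleftrightarrow> bounded_linear f \<and> (\<forall>c x. f (c *\<^sub>C x) = c *\<^sub>C f x)"

definition positive_op :: "('a::complex_hilbert \<Rightarrow> 'a) \<Rightarrow> bool" where
  "positive_op A \<longleftrightarrow> bounded_clinear A \<and>
     (\<forall>x. Im (cinner (A x) x) = 0 \<and> 0 \<le> Re (cinner (A x) x))"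

definition is_adjoint :: "('a::complex_hilbert \<Rightarrow> 'a) \<Rightarrow> ('a \<Rightarrow> 'a) \<Rightarrow> bool" where
  "is_adjoint S S' \<longleftrightarrow> (\<forall>x y. cinner (S x) y = cinner x (S' y))"

definition B_A :: "('a::complex_hilbert \<Rightarrow> 'a) \<Rightarrow> ('a \<Rightarrow> 'a) \<Rightarrow> bool" where
  "B_A A S \<longleftrightarrow> bounded_clinear S \<and>
     (\<exists>S'. is_adjoint S S' \<and> range (S' \<circ> A) \<subseteq> range A)"

text \<open>Generic A-seminorm and A-Davis-Wielandt radius with respect to an inner product
  \<open>inn\<close> and positive operator \<open>Aop\<close>: \<open>\<langle>x,z\<rangle>_A = \<langle>A x, z\<rangle>\<close>, \<open>\<parallel>z\<parallel>_A = \<langle>A z, z\<rangle>^{1/2}\<close>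
  (which equals \<open>\<parallel>A^{1/2} z\<parallel>\<close>).\<close>
definition semi_norm_gen :: "('b \<Rightarrow> 'b \<Rightarrow> complex) \<Rightarrow> ('b \<Rightarrow> 'b) \<Rightarrow> 'b \<Rightarrow> real" where
  "semi_norm_gen inn Aop z = sqrt (Re (inn (Aop z) z))"

definition dw_gen :: "('b \<Rightarrow> 'b \<Rightarrow> complex) \<Rightarrow> ('b \<Rightarrow> 'b) \<Rightarrow> ('b \<Rightarrow> 'b) \<Rightarrow> real" where
  "dw_gen inn Aop S = Sup {sqrt ((cmod (inn (Aop (S z)) z))\<^sup>2 + (semi_norm_gen inn Aop (S z)) ^ 4)
                          | z. semi_norm_gen inn Aop z = 1}"

definition dw_A :: "('a::complex_hilbert \<Rightarrow> 'a) \<Rightarrow> ('a \<Rightarrow> 'a) \<Rightarrow> real" where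
  "dw_A A S = dw_gen cinner A S"

definition sum_cinner :: "('a::complex_hilbert \<times> 'a) \<Rightarrow> ('a \<times> 'a) \<Rightarrow> complex" where
  "sum_cinner x z = cinner (fst x) (fst z) + cinner (snd x) (snd z)"

definition diag_op :: "('a \<Rightarrow> 'a) \<Rightarrow> ('a \<Rightarrow> 'a) \<Rightarrow> ('a \<times> 'a) \<Rightarrow> ('a \<times> 'a)" where
  "diag_op S T x = (S (fst x), T (snd x))"

definition A0 :: "('a \<Rightarrow> 'a) \<Rightarrow> ('a \<times> 'a) \<Rightarrow> ('a \<times> 'a)" where
  "A0 A = diag_op A A"

definition dw_A0 :: "('a::complex_hilbert \<Rightarrow> 'a) \<Rightarrow> ('a \<times> 'a \<Rightarrow> 'a \<times> 'a) \<Rightarrow> real" where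
  "dw_A0 A M = dw_gen sum_cinner (A0 A) M"

end

theory Submission
  imports Defs
begin


instance complex_hilbert \<subseteq> banach ..

context complex_inner begin

lemma cinner_zero_left[simp]: "cinner 0 y = 0"
  using cinner_add_left[of 0 0 y] by simp

lemma cinner_zero_right[simp]: "cinner y 0 = 0"
  using cinner_commute[of y 0] by simp

lemma cinner_minus_left: "cinner (- x) y = - cinner x y"
proof -
  have "cinner (-x) y + cinner x y = 0" using cinner_add_left[of "-x" x y] by simp
  note h = this
  have "cinner (-x) y = (cinner (-x) y + cinner x y) - cinner x y" by simp
  also have "\<dots> = - cinner x y" unfolding h by simp
  finally show ?thesis .
qed

lemma cinner_diff_left: "cinner (x - y) z = cinner x z - cinner y z"
  using cinner_add_left[of x "-y" z] cinner_minus_left[of y z] by simp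

lemma cinner_add_right: "cinner x (y + z) = cinner x y + cinner x z"
  by (simp add: cinner_commute[of x "y+z"] cinner_commute[of x y] cinner_commute[of x z] cinner_add_left)

lemma cinner_diff_right: "cinner x (y - z) = cinner x y - cinner x z"
  by (simp add: cinner_commute[of x "y-z"] cinner_commute[of x y] cinner_commute[of x z] cinner_diff_left)

lemma cinner_scaleC_right: "cinner x (a *\<^sub>C y) = cnj a * cinner x y"
  by (simp add: cinner_commute[of x "a *\<^sub>C y"] cinner_commute[of x y] cinner_scaleC_left)

lemma cinner_scaleR_left: "cinner (r *\<^sub>R x) y = complex_of_real r * cinner x y"
  by (simp add: scaleC_of_real[symmetric] cinner_scaleC_left)

lemma cinner_scaleR_right: "cinner x (r *\<^sub>R y) = complex_of_real r * cinner x y"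
  by (simp add: scaleC_of_real[symmetric] cinner_scaleC_right)

lemma cinner_self_zero: "cinner x x = 0 \<longleftrightarrow> x = 0"
  by (simp add: cinner_self_norm)

lemma cinner_ext: "(\<And>z. cinner z x = cinner z y) \<Longrightarrow> x = y"
proof -
  assume h: "\<And>z. cinner z x = cinner z y"
  have "cinner (x - y) (x - y) = 0" using h[of "x-y"] by (simp add: cinner_diff_right)
  then show "x = y" by (simp add: cinner_self_zero)
qed

end

lemma herm_CS:
  fixes B :: "'a::complex_vector_space \<Rightarrow> 'a \<Rightarrow> complex"
  assumes add: "\<And>x y z. B (x+y) z = B x z + B y z"
  and sc: "\<And>c x y. B (c *\<^sub>C x) y = c * B x y"
  and herm: "\<And>x y. B x y = cnj (B y x)"
  and pos: "\<And>x. 0 \<le> Re (B x x)"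
  shows "(cmod (B x y))\<^sup>2 \<le> Re (B x x) * Re (B y y)"
proof -
  define b where "b = B x y"
  define P where "P = Re (B x x)"
  define Q where "Q = Re (B y y)"
  have addr: "B u (v + w) = B u v + B u w" for u v w
    by (metis add herm complex_cnj_add)
  have scr: "B u (c *\<^sub>C v) = cnj c * B u v" for u v c
    by (metis sc herm complex_cnj_mult)
  show ?thesis
  proof (cases "b = 0")
    case True
    then show ?thesis using pos[of x] pos[of y] by (simp add: b_def)
  next
    case False
    define w where "w = sgn b"
    have wb: "cnj w * b = of_real (cmod b)"
      proof -
        have "cnj w * b = cnj b * b / of_real (cmod b)" using False
          by (simp add: w_def sgn_div_norm scaleR_conv_of_real field_simps)
        also have "\<dots> = of_real (cmod b)" using False
          by (simp add: complex_norm_square[symmetric] power2_eq_square mult.commute)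
        finally show ?thesis .
      qed
    have ww: "w * cnj w = 1"
      unfolding w_def using False 
      by (metis complex_norm_square norm_sgn of_real_1 one_power2 sgn_eq_0_iff)
    have quad: "0 \<le> P - 2 * t * cmod b + t\<^sup>2 * Q" for t :: real
    proof -
      define s where "s = - (of_real t * w)"
      have e: "B (x + s *\<^sub>C y) (x + s *\<^sub>C y) = B x x + cnj s * b + s * cnj b + s * cnj s * B y y"
      proof -
        have "B (x + s *\<^sub>C y) (x + s *\<^sub>C y) = B x (x + s *\<^sub>C y) + s * B y (x + s *\<^sub>C y)"
          by (simp add: add sc)
        also have "\<dots> = B x x + cnj s * B x y + s * (B y x + cnj s * B y y)"
          by (simp add: addr scr)
        finally show ?thesis by (simp add: b_def herm[of y x] algebra_simps)
      qed
      have "cnj s * b = - of_real t * of_real (cmod b)"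
        unfolding s_def using wb by (simp add: algebra_simps)
      moreover have "s * cnj b = - of_real t * of_real (cmod b)"
        using arg_cong[OF \<open>cnj s * b = _\<close>, of cnj] by (simp add: mult.commute)
      moreover have "s * cnj s = of_real (t\<^sup>2)"
        unfolding s_def using ww by (simp add: algebra_simps power2_eq_square)
      ultimately have "Re (B (x + s *\<^sub>C y) (x + s *\<^sub>C y)) = P - 2 * t * cmod b + t\<^sup>2 * Q"
        using e by (simp add: P_def Q_def)
      then show ?thesis using pos by metis
    qed
    have bpos: "cmod b > 0" using False by simp
    show ?thesis
    proof (cases "Q = 0")
      case True
      have "0 \<le> P - 2 * ((P+1) / (2 * cmod b)) * cmod b" using quad[of "(P+1) / (2 * cmod b)"] True by simp
      then show ?thesis using bpos by simp
    next
      case False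
      then have Qp: "Q > 0" using pos[of y] Q_def by linarith
      have "0 \<le> P - 2 * (cmod b / Q) * cmod b + (cmod b / Q)\<^sup>2 * Q" by (rule quad)
      then have "0 \<le> P - (cmod b)\<^sup>2 / Q" using Qp by (simp add: power2_eq_square field_simps)
      then have "(cmod b)\<^sup>2 \<le> P * Q" using Qp by (simp add: field_simps)
      then show ?thesis by (simp add: b_def P_def Q_def)
    qed
  qed
qed




lemma norm_CS: "cmod (cinner x y) \<le> norm x * norm (y::'a::complex_inner)"
proof -
  have "(cmod (cinner x y))\<^sup>2 \<le> Re (cinner x x) * Re (cinner y y)"
    by (rule herm_CS) (auto simp: cinner_add_left cinner_scaleC_left intro: cinner_commute simp: cinner_self_norm)
  also have "\<dots> = (norm x * norm y)\<^sup>2" by (simp add: cinner_self_norm power_mult_distrib)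
  finally show ?thesis by (meson norm_ge_zero power2_le_imp_le zero_le_mult_iff)
qed

lemma clin_bl: "bounded_clinear f \<Longrightarrow> bounded_linear f" by (simp add: bounded_clinear_def)
lemma clin_sc: "bounded_clinear f \<Longrightarrow> f (c *\<^sub>C x) = c *\<^sub>C f x" by (simp add: bounded_clinear_def)

definition nA :: "('a::complex_hilbert \<Rightarrow> 'a) \<Rightarrow> 'a \<Rightarrow> real" where
  "nA A x = Re (cinner (A x) x)"

lemma A_herm:
  assumes "positive_op A"
  shows "cinner (A x) y = cinner x (A y)"
proof -
  have cl: "bounded_clinear A" and p: "\<And>z. Im (cinner (A z) z) = 0"
    using assms by (auto simp: positive_op_def)
  have lin: "bounded_linear A" using cl by (rule clin_bl)
  define a where "a = cinner (A x) y"
  define b where "b = cinner (A y) x"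
  have "Im (cinner (A (x + y)) (x + y)) = 0" by (rule p)
  moreover have "cinner (A (x + y)) (x + y) = cinner (A x) x + a + b + cinner (A y) y"
    by (simp add: linear_simps(1)[OF lin] cinner_add_left cinner_add_right a_def b_def)
  ultimately have 1: "Im a + Im b = 0" using p[of x] p[of y] by simp
  have "Im (cinner (A (x + \<i> *\<^sub>C y)) (x + \<i> *\<^sub>C y)) = 0" by (rule p)
  moreover have "cinner (A (x + \<i> *\<^sub>C y)) (x + \<i> *\<^sub>C y) = cinner (A x) x - \<i> * a + \<i> * b + cinner (A y) y"
    by (simp add: linear_simps(1)[OF lin] clin_sc[OF cl] cinner_add_left cinner_add_right
        cinner_scaleC_left cinner_scaleC_right a_def b_def algebra_simps)
  ultimately have 2: "Re b - Re a = 0" using p[of x] p[of y] by simp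
  have "b = cnj a" using 1 2 by (simp add: complex_eq_iff)
  then show ?thesis unfolding a_def b_def by (metis cinner_commute complex_cnj_cnj)
qed

lemma A_self: "positive_op A \<Longrightarrow> cinner (A x) x = complex_of_real (nA A x)"
  by (simp add: positive_op_def nA_def complex_eq_iff)

lemma nA_nonneg: "positive_op A \<Longrightarrow> 0 \<le> nA A x"
  by (simp add: positive_op_def nA_def)

lemma A_CS:
  assumes "positive_op A"
  shows "(cmod (cinner (A x) y))\<^sup>2 \<le> nA A x * nA A y"
proof -
  have cl: "bounded_clinear A" using assms by (auto simp: positive_op_def)
  have lin: "bounded_linear A" using cl by (rule clin_bl)
  show ?thesis unfolding nA_def
  proof (rule herm_CS[where B = "\<lambda>x y. cinner (A x) y"])
    show "cinner (A (u + v)) w = cinner (A u) w + cinner (A v) w" for u v w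
      by (simp add: linear_simps(1)[OF lin] cinner_add_left)
    show "cinner (A (c *\<^sub>C u)) v = c * cinner (A u) v" for c u v
      by (simp add: clin_sc[OF cl] cinner_scaleC_left)
    show "cinner (A u) v = cnj (cinner (A v) u)" for u v
      by (metis A_herm[OF assms] cinner_commute)
    show "0 \<le> Re (cinner (A u) u)" for u using assms by (simp add: positive_op_def)
  qed
qed

lemma nA_bound:
  assumes "positive_op A"
  obtains KA where "KA > 0" "\<And>u. nA A u \<le> KA * (norm u)\<^sup>2"
proof -
  have lin: "bounded_linear A" using assms by (auto simp: positive_op_def bounded_clinear_def)
  obtain KA where KA: "KA > 0" "\<And>u. norm (A u) \<le> norm u * KA"
    using bounded_linear.pos_bounded[OF lin] by blast
  have "nA A u \<le> KA * (norm u)\<^sup>2" for u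
  proof -
    have "nA A u \<le> cmod (cinner (A u) u)" unfolding nA_def by (rule complex_Re_le_cmod)
    also have "\<dots> \<le> norm (A u) * norm u" by (rule norm_CS)
    also have "\<dots> \<le> norm u * KA * norm u" by (simp add: KA(2) mult_right_mono)
    finally show ?thesis by (simp add: power2_eq_square algebra_simps)
  qed
  then show ?thesis using KA that by blast
qed

lemma nA_zero_imp:
  assumes "positive_op A" "nA A x = 0"
  shows "A x = 0"
proof -
  have "(cmod (cinner (A x) (A x)))\<^sup>2 \<le> nA A x * nA A (A x)" by (rule A_CS[OF assms(1)])
  then have "cinner (A x) (A x) = 0" using assms(2) by simp
  then show ?thesis by (simp add: cinner_self_zero)
qed

lemma adjoint_bl:
  assumes S: "bounded_clinear S" and adj: "is_adjoint S S'"
  shows "bounded_linear S'"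
proof -
  have adj': "\<And>x y. cinner (S x) y = cinner x (S' y)" using adj by (simp add: is_adjoint_def)
  have lin: "bounded_linear S" using S by (rule clin_bl)
  obtain K where K: "K > 0" "\<And>u. norm (S u) \<le> norm u * K"
    using bounded_linear.pos_bounded[OF lin] by blast
  have add: "S' (y + z) = S' y + S' z" for y z
    by (rule cinner_ext) (simp add: adj'[symmetric] cinner_add_right)
  have scR: "S' (r *\<^sub>R y) = r *\<^sub>R S' y" for r y
    by (rule cinner_ext) (simp add: adj'[symmetric] cinner_scaleR_right)
  have bd: "norm (S' y) \<le> norm y * K" for y
  proof -
    have "(norm (S' y))\<^sup>2 = Re (cinner (S' y) (S' y))" by (simp add: cinner_self_norm)
    also have "\<dots> = Re (cinner (S (S' y)) y)" by (simp add: adj')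
    also have "\<dots> \<le> cmod (cinner (S (S' y)) y)" by (rule complex_Re_le_cmod)
    also have "\<dots> \<le> norm (S (S' y)) * norm y" by (rule norm_CS)
    also have "\<dots> \<le> norm (S' y) * K * norm y" by (simp add: K(2) mult_right_mono)
    finally have "(norm (S' y))\<^sup>2 \<le> norm (S' y) * (norm y * K)" by (simp add: algebra_simps)
    then show ?thesis using K(1)
      by (cases "norm (S' y) = 0") (auto simp: power2_eq_square)
  qed
  show ?thesis
    using add scR bd by (intro bounded_linear_intro[where K=K]) auto
qed




lemma douglas:
  fixes L :: "'a::banach \<Rightarrow> 'b::real_normed_vector" and A :: "'a \<Rightarrow> 'b"
  assumes L: "bounded_linear L" and A: "bounded_linear A" and rng: "\<And>y. \<exists>w. L y = A w"
  shows "\<exists>K>0. \<forall>y. \<exists>w. L y = A w \<and> norm w \<le> K * norm y"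
proof -
  interpret L: bounded_linear L by (rule L)
  interpret A: bounded_linear A by (rule A)
  define E where "E n = {y. \<exists>w. L y = A w \<and> norm w \<le> real n}" for n :: nat
  have UE: "(\<Union>n. E n) = UNIV"
  proof -
    have "y \<in> (\<Union>n. E n)" for y
    proof -
      obtain w where "L y = A w" using rng by blast
      moreover have "norm w \<le> real (nat \<lceil>norm w\<rceil>)" by linarith
      ultimately show ?thesis unfolding E_def by blast
    qed
    then show ?thesis by blast
  qed
  have "\<exists>n. interior (closure (E n)) \<noteq> {}"
  proof (rule ccontr)
    assume "\<not> ?thesis"
    then have emp: "\<And>n. interior (closure (E n)) = {}" by blast
    have "euclidean interior_of \<Union>(range (\<lambda>n. closure (E n))) = {}"
      by (rule Baire_category_alt) (auto simp: completely_metrizable_space_euclidean closed_closedin[symmetric] emp)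
    moreover have "\<Union>(range (\<lambda>n. closure (E n))) = UNIV"
      using UE closure_subset by blast
    ultimately show False by simp
  qed
  then obtain n where "interior (closure (E n)) \<noteq> {}" by blast
  then obtain y0 where "y0 \<in> interior (closure (E n))" by blast
  then obtain r where r: "r > 0" "ball y0 r \<subseteq> closure (E n)"
    by (meson mem_interior)
  have Esub: "a \<in> E n \<Longrightarrow> b \<in> E n \<Longrightarrow> b - a \<in> E (2 * n)" for a b
  proof -
    assume "a \<in> E n" "b \<in> E n"
    then obtain wa wb where "L a = A wa" "norm wa \<le> real n" "L b = A wb" "norm wb \<le> real n"
      unfolding E_def by blast
    then have "L (b - a) = A (wb - wa)" "norm (wb - wa) \<le> real (2 * n)"
      using norm_triangle_ineq4[of wb wa] by (auto simp: L.diff A.diff)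
    then show ?thesis unfolding E_def by blast
  qed
  have near: "\<forall>z. norm z < r \<longrightarrow> z \<in> closure (E (2 * n))"
  proof (intro allI impI)
    fix z :: 'a assume z: "norm z < r"
    have y0c: "y0 \<in> closure (E n)" using r by auto
    have y1c: "y0 + z \<in> closure (E n)" using r z by (auto simp: dist_norm)
    show "z \<in> closure (E (2 * n))"
    proof (subst closure_approachable, intro allI impI)
      fix e :: real assume e: "e > 0"
      obtain a where a: "a \<in> E n" "dist a y0 < e / 2"
        using y0c e closure_approachable[of y0 "E n"] by (meson half_gt_zero)
      obtain b where b: "b \<in> E n" "dist b (y0 + z) < e / 2"
        using y1c e closure_approachable[of "y0 + z" "E n"] by (meson half_gt_zero)
      have "dist (b - a) z \<le> dist b (y0 + z) + dist a y0"
        unfolding dist_norm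
        using norm_triangle_ineq4[of "b - (y0 + z)" "a - y0"] by (simp add: algebra_simps)
      then have "dist (b - a) z < e" using a b by linarith
      then show "\<exists>x\<in>E (2 * n). dist x z < e" using Esub[OF a(1) b(1)] by blast
    qed
  qed
  define M where "M = 4 * real n / r + 1"
  have "4 * real n / r \<ge> 0" using r by simp
  then have Mpos: "M > 0" unfolding M_def by linarith
  have key: "\<forall>z. \<exists>y w. L y = A w \<and> norm w \<le> M * norm z \<and> norm (z - y) \<le> norm z / 2"
  proof
    fix z :: 'a
    show "\<exists>y w. L y = A w \<and> norm w \<le> M * norm z \<and> norm (z - y) \<le> norm z / 2"
    proof (cases "z = 0")
      case True
      then show ?thesis by (intro exI[of _ 0]) (auto simp: L.zero A.zero)
    next
      case False
      define t where "t = 2 * norm z / r"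
      have t: "t > 0" unfolding t_def using False r by simp
      define z' where "z' = (1 / t) *\<^sub>R z"
      have nz': "norm z' = r / 2" unfolding z'_def t_def using False r by simp
      then have "z' \<in> closure (E (2 * n))" using near r by simp
      then obtain a where a: "a \<in> E (2 * n)" "dist a z' < r / 4"
        using closure_approachable[of z' "E (2 * n)"] r by (meson divide_pos_pos zero_less_numeral)
      then obtain wa where wa: "L a = A wa" "norm wa \<le> real (2 * n)" unfolding E_def by blast
      have "L (t *\<^sub>R a) = A (t *\<^sub>R wa)" by (simp add: L.scaleR A.scaleR wa(1))
      moreover have "norm (t *\<^sub>R wa) \<le> M * norm z"
      proof -
        have "norm (t *\<^sub>R wa) = t * norm wa" using t by simp
        also have "\<dots> \<le> t * real (2 * n)" using wa(2) t by (simp add: mult_left_mono)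
        also have "\<dots> = (4 * real n / r) * norm z" unfolding t_def by (simp add: field_simps)
        also have "\<dots> \<le> M * norm z" unfolding M_def by (simp add: distrib_right)
        finally show ?thesis .
      qed
      moreover have "norm (z - t *\<^sub>R a) \<le> norm z / 2"
      proof -
        have "z = t *\<^sub>R z'" unfolding z'_def using t by simp
        then have "z - t *\<^sub>R a = t *\<^sub>R (z' - a)" by (simp add: scaleR_diff_right)
        then have "norm (z - t *\<^sub>R a) = t * dist a z'" using t by (simp add: dist_norm norm_minus_commute)
        also have "\<dots> \<le> t * (r / 4)" using a(2) t by simp
        also have "\<dots> = norm z / 2" unfolding t_def using r by simp
        finally show ?thesis .
      qed
      ultimately show ?thesis by blast
    qed
  qed
  then obtain Y W where YW: "\<And>z. L (Y z) = A (W z)" "\<And>z. norm (W z) \<le> M * norm z"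
      "\<And>z. norm (z - Y z) \<le> norm z / 2"
    by metis
  have "\<exists>w. L y = A w \<and> norm w \<le> (2 * M) * norm y" for y
  proof -
    define zs where "zs k = ((\<lambda>z. z - Y z) ^^ k) y" for k
    have zs0: "zs 0 = y" and zsS: "zs (Suc k) = zs k - Y (zs k)" for k
      unfolding zs_def by auto
    have nzs: "norm (zs k) \<le> norm y / 2 ^ k" for k
    proof (induction k)
      case 0 then show ?case by (simp add: zs0)
    next
      case (Suc k)
      have "norm (zs (Suc k)) \<le> norm (zs k) / 2" unfolding zsS by (rule YW(3))
      also have "\<dots> \<le> norm y / 2 ^ k / 2" using Suc by simp
      finally show ?case by simp
    qed
    have sumY: "(\<Sum>k<m. Y (zs k)) = y - zs m" for m
      by (induction m) (auto simp: zs0 zsS)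
    define ws where "ws k = W (zs k)" for k
    define g where "g k = M * norm y * (1/2) ^ k" for k
    have wsg: "norm (ws k) \<le> g k" for k
    proof -
      have "norm (ws k) \<le> M * norm (zs k)" unfolding ws_def by (rule YW(2))
      also have "\<dots> \<le> M * (norm y / 2 ^ k)" using nzs[of k] Mpos by (intro mult_left_mono) auto
      finally show ?thesis unfolding g_def by (simp add: power_one_over field_simps)
    qed
    have sg: "summable g" unfolding g_def by (intro summable_mult summable_geometric) simp
    have sn: "summable (\<lambda>k. norm (ws k))"
      by (rule summable_comparison_test'[OF sg, of 0]) (simp add: wsg)
    have sw: "summable ws" by (rule summable_norm_cancel[OF sn])
    have "norm (suminf ws) \<le> (\<Sum>k. norm (ws k))" by (rule summable_norm[OF sn])
    also have "\<dots> \<le> suminf g" by (rule suminf_le[OF wsg sn sg])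
    also have "suminf g = 2 * M * norm y"
      unfolding g_def using suminf_geometric[of "1/2::real"] by (simp add: suminf_mult)
    finally have nw: "norm (suminf ws) \<le> 2 * M * norm y" .
    have t1: "(\<lambda>m. A (\<Sum>k<m. ws k)) \<longlonglongrightarrow> A (suminf ws)"
      by (rule A.tendsto[OF summable_LIMSEQ[OF sw]])
    have eq: "A (\<Sum>k<m. ws k) = L y - L (zs m)" for m
    proof -
      have "A (\<Sum>k<m. ws k) = (\<Sum>k<m. A (ws k))" by (simp add: A.sum)
      also have "\<dots> = (\<Sum>k<m. L (Y (zs k)))" by (simp add: ws_def YW(1))
      also have "\<dots> = L (\<Sum>k<m. Y (zs k))" by (simp add: L.sum)
      also have "\<dots> = L y - L (zs m)" by (simp add: sumY L.diff)
      finally show ?thesis .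
    qed
    have z0: "zs \<longlonglongrightarrow> 0"
    proof (rule tendsto_norm_zero_cancel, rule Lim_null_comparison)
      show "\<forall>\<^sub>F k in sequentially. norm (norm (zs k)) \<le> norm y / 2 ^ k" using nzs by simp
      show "(\<lambda>k. norm y / 2 ^ k) \<longlonglongrightarrow> 0" by (rule LIMSEQ_divide_realpow_zero) simp
    qed
    have "(\<lambda>m. L y - L (zs m)) \<longlonglongrightarrow> L y - L 0"
      by (intro tendsto_intros L.tendsto z0)
    then have t2: "(\<lambda>m. A (\<Sum>k<m. ws k)) \<longlonglongrightarrow> L y" by (simp add: eq L.zero)
    have "L y = A (suminf ws)" using LIMSEQ_unique[OF t2 t1] .
    then show ?thesis using nw by (intro exI[of _ "suminf ws"]) simp
  qed
  then show ?thesis using Mpos by (intro exI[of _ "2 * M"]) auto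
qed




lemma power_trick:
  fixes a :: "nat \<Rightarrow> real"
  assumes nn: "\<And>k. 0 \<le> a k"
    and lc: "\<And>k. (a (Suc k))\<^sup>2 \<le> a k * a (Suc (Suc k))"
    and ub: "\<And>k. a k \<le> B * q ^ k"
    and q: "q > 0"
  shows "a 1 \<le> q * a 0"
proof (rule ccontr)
  assume "\<not> ?thesis"
  then have gt: "a 1 > q * a 0" by simp
  have a0: "a 0 > 0"
  proof (rule ccontr)
    assume "\<not> a 0 > 0"
    then have "a 0 = 0" using nn[of 0] by simp
    then have "(a 1)\<^sup>2 \<le> 0" using lc[of 0] by simp
    then have "a 1 = 0" by simp
    then show False using gt \<open>a 0 = 0\<close> by simp
  qed
  define \<rho> where "\<rho> = a 1 / a 0"
  have rq: "\<rho> > q" unfolding \<rho>_def using gt a0 by (simp add: field_simps)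
  have P: "a k > 0 \<and> a (Suc k) \<ge> \<rho> * a k" for k
  proof (induction k)
    case 0 then show ?case using a0 by (simp add: \<rho>_def)
  next
    case (Suc k)
    then have ak: "a k > 0" and st: "a (Suc k) \<ge> \<rho> * a k" by auto
    have ak1: "a (Suc k) > 0" using ak st rq q by (smt (verit) mult_pos_pos)
    have "a (Suc k) * a (Suc k) \<ge> a (Suc k) * (\<rho> * a k)"
      using st ak1 by (simp add: mult_left_mono)
    then have "a k * a (Suc (Suc k)) \<ge> a k * (\<rho> * a (Suc k))"
      using lc[of k] by (simp add: power2_eq_square algebra_simps)
    then have "a (Suc (Suc k)) \<ge> \<rho> * a (Suc k)" using ak
      by (simp add: mult_le_cancel_left_pos)
    then show ?case using ak1 by simp
  qed
  have low: "a k \<ge> \<rho> ^ k * a 0" for k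
  proof (induction k)
    case 0 then show ?case by simp
  next
    case (Suc k)
    have "\<rho> ^ Suc k * a 0 = \<rho> * (\<rho> ^ k * a 0)" by simp
    also have "\<dots> \<le> \<rho> * a k" using Suc rq q by (simp add: mult_left_mono)
    also have "\<dots> \<le> a (Suc k)" using P by blast
    finally show ?case .
  qed
  have "1 < \<rho> / q" using rq q by simp
  then obtain k where k: "B / a 0 < (\<rho> / q) ^ k" using real_arch_pow by blast
  have "\<rho> ^ k * a 0 \<le> B * q ^ k" using low[of k] ub[of k] by linarith
  then have "(\<rho> / q) ^ k * a 0 \<le> B" using q by (simp add: power_divide field_simps)
  then have "(\<rho> / q) ^ k \<le> B / a 0" using a0 by (simp add: field_simps)
  then show False using k by simp
qed

lemma A_bounded:
  assumes A: "positive_op A" and S: "B_A A S"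
  shows "\<exists>c\<ge>0. \<forall>x. nA A (S x) \<le> c * nA A x"
proof -
  obtain S' where adj: "is_adjoint S S'" and rng: "range (S' \<circ> A) \<subseteq> range A"
    using S by (auto simp: B_A_def)
  have Scl: "bounded_clinear S" using S by (simp add: B_A_def)
  have Acl: "bounded_clinear A" using A by (simp add: positive_op_def)
  have Sl: "bounded_linear S" and Al: "bounded_linear A" using Scl Acl by (auto intro: clin_bl)
  have S'l: "bounded_linear S'" by (rule adjoint_bl[OF Scl adj])
  have adj': "\<And>x y. cinner (S x) y = cinner x (S' y)" using adj by (simp add: is_adjoint_def)
  have Lb: "bounded_linear (\<lambda>y. S' (A y))"
    using bounded_linear_compose[OF S'l Al] by (simp add: o_def)
  have rng': "\<exists>w. S' (A y) = A w" for y using rng by auto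
  obtain K where K: "K > 0" "\<forall>y. \<exists>w. S' (A y) = A w \<and> norm w \<le> K * norm y"
    using douglas[OF Lb Al rng'] by blast
  then obtain W where W: "\<And>y. S' (A y) = A (W y)" "\<And>y. norm (W y) \<le> K * norm y"
    by metis
  obtain KS where KS: "KS > 0" "\<And>u. norm (S u) \<le> norm u * KS"
    using bounded_linear.pos_bounded[OF Sl] by blast
  obtain KA where KA: "KA > 0" "\<And>u. nA A u \<le> KA * (norm u)\<^sup>2"
    using nA_bound[OF A] by blast
  define C where "C x = W (S x)" for x
  define Lc where "Lc = K * KS"
  have Lc: "Lc > 0" using K KS by (simp add: Lc_def)
  have AC: "A (C x) = S' (A (S x))" for x by (simp add: C_def W(1))
  have nC: "norm (C x) \<le> Lc * norm x" for x
  proof -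
    have "norm (C x) \<le> K * norm (S x)" unfolding C_def by (rule W(2))
    also have "\<dots> \<le> K * (norm x * KS)" using K KS by (simp add: mult_left_mono)
    finally show ?thesis by (simp add: Lc_def algebra_simps)
  qed
  have id1: "cinner (A (S x)) (S x) = cinner (A x) (C x)" for x
  proof -
    have "cinner (A (S x)) (S x) = cinner (S x) (A (S x))" by (rule A_herm[OF A])
    also have "\<dots> = cinner x (A (C x))" by (simp add: adj' AC)
    also have "\<dots> = cinner (A x) (C x)" by (simp add: A_herm[OF A])
    finally show ?thesis .
  qed
  have id2: "cinner (A (C x)) (C x) = cinner (A x) (C (C x))" for x
  proof -
    have "cinner (A (C x)) (C x) = cnj (cinner (C x) (S' (A (S x))))"
      by (simp add: AC cinner_commute[of "S' (A (S x))"])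
    also have "\<dots> = cnj (cinner (S (C x)) (A (S x)))" by (simp add: adj')
    also have "\<dots> = cnj (cinner (A (S (C x))) (S x))" by (simp add: A_herm[OF A])
    also have "\<dots> = cinner (S x) (A (S (C x)))" by (simp add: cinner_commute[of "S x"])
    also have "\<dots> = cinner x (A (C (C x)))" by (simp add: adj' AC)
    also have "\<dots> = cinner (A x) (C (C x))" by (simp add: A_herm[OF A])
    finally show ?thesis .
  qed
  have step: "(nA A (C x))\<^sup>2 \<le> nA A x * nA A (C (C x))" for x
  proof -
    have "nA A (C x) = Re (cinner (A x) (C (C x)))" by (simp add: nA_def id2)
    also have "\<dots> \<le> cmod (cinner (A x) (C (C x)))" by (rule complex_Re_le_cmod)
    finally have "(nA A (C x))\<^sup>2 \<le> (cmod (cinner (A x) (C (C x))))\<^sup>2"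
      using nA_nonneg[OF A, of "C x"] by (simp add: power_mono)
    also have "\<dots> \<le> nA A x * nA A (C (C x))" by (rule A_CS[OF A])
    finally show ?thesis .
  qed
  have Cbound: "nA A (C x) \<le> Lc\<^sup>2 * nA A x" for x
  proof -
    define a where "a k = nA A ((C ^^ k) x)" for k
    have "a 1 \<le> Lc\<^sup>2 * a 0"
    proof (rule power_trick)
      show "0 \<le> a k" for k unfolding a_def by (rule nA_nonneg[OF A])
      show "(a (Suc k))\<^sup>2 \<le> a k * a (Suc (Suc k))" for k
        unfolding a_def using step[of "(C ^^ k) x"] by simp
      have nk: "norm ((C ^^ k) x) \<le> Lc ^ k * norm x" for k
      proof (induction k)
        case 0 then show ?case by simp
      next
        case (Suc k)
        have "norm ((C ^^ Suc k) x) \<le> Lc * norm ((C ^^ k) x)" using nC by simp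
        also have "\<dots> \<le> Lc * (Lc ^ k * norm x)" using Suc.IH Lc by (intro mult_left_mono) auto
        finally show ?case by simp
      qed
      show "a k \<le> (KA * (norm x)\<^sup>2) * (Lc\<^sup>2) ^ k" for k
      proof -
        have "a k \<le> KA * (norm ((C ^^ k) x))\<^sup>2" unfolding a_def by (rule KA(2))
        also have "\<dots> \<le> KA * (Lc ^ k * norm x)\<^sup>2"
          using nk[of k] KA(1) by (intro mult_left_mono power_mono) auto
        finally show ?thesis by (simp add: power_mult_distrib power_mult[symmetric] mult_ac)
      qed
      show "Lc\<^sup>2 > 0" using Lc by simp
    qed
    then show ?thesis by (simp add: a_def)
  qed
  have "nA A (S x) \<le> Lc * nA A x" for x
  proof -
    have "nA A (S x) = Re (cinner (A x) (C x))" by (simp add: nA_def id1)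
    also have "\<dots> \<le> cmod (cinner (A x) (C x))" by (rule complex_Re_le_cmod)
    finally have "(nA A (S x))\<^sup>2 \<le> (cmod (cinner (A x) (C x)))\<^sup>2"
      using nA_nonneg[OF A, of "S x"] by (simp add: power_mono)
    also have "\<dots> \<le> nA A x * nA A (C x)" by (rule A_CS[OF A])
    also have "\<dots> \<le> nA A x * (Lc\<^sup>2 * nA A x)"
      using Cbound[of x] nA_nonneg[OF A, of x] by (simp add: mult_left_mono)
    also have "\<dots> = (Lc * nA A x)\<^sup>2" by (simp add: power2_eq_square)
    finally have "(nA A (S x))\<^sup>2 \<le> (Lc * nA A x)\<^sup>2" .
    moreover have "0 \<le> Lc * nA A x" using Lc nA_nonneg[OF A, of x] by simp
    ultimately show ?thesis by (rule power2_le_imp_le)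
  qed
  then show ?thesis using Lc by (intro exI[of _ Lc]) auto
qed




definition FS :: "('a::complex_hilbert \<Rightarrow> 'a) \<Rightarrow> ('a \<Rightarrow> 'a) \<Rightarrow> 'a \<Rightarrow> real" where
  "FS A S z = sqrt ((cmod (cinner (A (S z)) z))\<^sup>2 + (nA A (S z))\<^sup>2)"

definition GS :: "('a::complex_hilbert \<Rightarrow> 'a) \<Rightarrow> ('a \<Rightarrow> 'a) \<Rightarrow> ('a \<Rightarrow> 'a) \<Rightarrow> 'a \<times> 'a \<Rightarrow> real" where
  "GS A S T p = sqrt ((cmod (cinner (A (S (fst p))) (fst p) + cinner (A (T (snd p))) (snd p)))\<^sup>2
      + (nA A (S (fst p)) + nA A (T (snd p)))\<^sup>2)"

lemma sqrt4: "0 \<le> t \<Longrightarrow> (sqrt t) ^ 4 = t\<^sup>2"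
proof -
  assume "0 \<le> t"
  have "(sqrt t) ^ 4 = (sqrt t) ^ (2 * 2)" by simp
  also have "\<dots> = ((sqrt t)\<^sup>2)\<^sup>2" by (rule power_mult)
  finally have "(sqrt t) ^ 4 = ((sqrt t)\<^sup>2)\<^sup>2" .
  then show ?thesis using \<open>0 \<le> t\<close> by simp
qed

lemma dwA_eq:
  assumes A: "positive_op A"
  shows "dw_A A S = Sup (FS A S ` {z. nA A z = 1})"
proof -
  have "{sqrt ((cmod (cinner (A (S z)) z))\<^sup>2 + (semi_norm_gen cinner A (S z)) ^ 4) | z. semi_norm_gen cinner A z = 1}
      = FS A S ` {z. nA A z = 1}"
  proof -
    have e1: "semi_norm_gen cinner A z = 1 \<longleftrightarrow> nA A z = 1" for z
      by (simp add: semi_norm_gen_def nA_def[symmetric])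
    have e2: "(semi_norm_gen cinner A (S z)) ^ 4 = (nA A (S z))\<^sup>2" for z
      by (simp add: semi_norm_gen_def nA_def[symmetric] sqrt4 nA_nonneg[OF A])
    show ?thesis by (auto simp: e1 e2 FS_def)
  qed
  then show ?thesis by (simp add: dw_A_def dw_gen_def)
qed

lemma dwA0_eq:
  assumes A: "positive_op A"
  shows "dw_A0 A (diag_op S T) = Sup (GS A S T ` {p. nA A (fst p) + nA A (snd p) = 1})"
proof -
  have e1: "semi_norm_gen sum_cinner (A0 A) p = 1 \<longleftrightarrow> nA A (fst p) + nA A (snd p) = 1" for p
    by (simp add: semi_norm_gen_def sum_cinner_def A0_def diag_op_def nA_def)
  have e2: "(semi_norm_gen sum_cinner (A0 A) (diag_op S T p)) ^ 4 = (nA A (S (fst p)) + nA A (T (snd p)))\<^sup>2" for p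
  proof -
    have "semi_norm_gen sum_cinner (A0 A) (diag_op S T p) = sqrt (nA A (S (fst p)) + nA A (T (snd p)))"
      by (simp add: semi_norm_gen_def sum_cinner_def A0_def diag_op_def nA_def)
    then show ?thesis by (simp add: sqrt4 nA_nonneg[OF A])
  qed
  have e3: "sum_cinner (A0 A (diag_op S T p)) p = cinner (A (S (fst p))) (fst p) + cinner (A (T (snd p))) (snd p)" for p
    by (simp add: sum_cinner_def A0_def diag_op_def)
  have "{sqrt ((cmod (sum_cinner (A0 A (diag_op S T p)) p))\<^sup>2 + (semi_norm_gen sum_cinner (A0 A) (diag_op S T p)) ^ 4) | p. semi_norm_gen sum_cinner (A0 A) p = 1}
      = GS A S T ` {p. nA A (fst p) + nA A (snd p) = 1}" (is "?L = _")
  proof -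
    have "?L = (\<lambda>p. sqrt ((cmod (sum_cinner (A0 A (diag_op S T p)) p))\<^sup>2 + (semi_norm_gen sum_cinner (A0 A) (diag_op S T p)) ^ 4)) ` {p. semi_norm_gen sum_cinner (A0 A) p = 1}"
      by blast
    also have "\<dots> = GS A S T ` {p. nA A (fst p) + nA A (snd p) = 1}"
      by (rule image_cong) (simp_all add: e1 e2 e3 GS_def)
    finally show ?thesis .
  qed
  then show ?thesis by (simp add: dw_A0_def dw_gen_def)
qed

lemma lin_facts:
  assumes A: "positive_op A" and S: "B_A A S"
  shows "cinner (A (S (r *\<^sub>R x))) (r *\<^sub>R x) = complex_of_real (r\<^sup>2) * cinner (A (S x)) x"
    and "nA A (S (r *\<^sub>R x)) = r\<^sup>2 * nA A (S x)"
    and "nA A (r *\<^sub>R x) = r\<^sup>2 * nA A x"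
    and "S 0 = 0"
proof -
  have Al: "bounded_linear A" using A by (auto simp: positive_op_def intro: clin_bl)
  have Sl: "bounded_linear S" using S by (auto simp: B_A_def intro: clin_bl)
  interpret A: bounded_linear A by (rule Al)
  interpret S: bounded_linear S by (rule Sl)
  show "cinner (A (S (r *\<^sub>R x))) (r *\<^sub>R x) = complex_of_real (r\<^sup>2) * cinner (A (S x)) x"
    by (simp add: S.scaleR A.scaleR cinner_scaleR_left cinner_scaleR_right power2_eq_square)
  show "nA A (S (r *\<^sub>R x)) = r\<^sup>2 * nA A (S x)"
    by (simp add: nA_def S.scaleR A.scaleR cinner_scaleR_left cinner_scaleR_right power2_eq_square)
  show "nA A (r *\<^sub>R x) = r\<^sup>2 * nA A x"
    by (simp add: nA_def A.scaleR cinner_scaleR_left cinner_scaleR_right power2_eq_square)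
  show "S 0 = 0" by (rule S.zero)
qed

lemma FS_bound:
  assumes A: "positive_op A" and S: "B_A A S"
  obtains c where "c \<ge> 0" "\<And>z. nA A z = 1 \<Longrightarrow> FS A S z \<le> c"
proof -
  obtain c where c: "c \<ge> 0" "\<And>x. nA A (S x) \<le> c * nA A x"
    using A_bounded[OF A S] by blast
  have "FS A S z \<le> sqrt (c + c\<^sup>2)" if z: "nA A z = 1" for z
  proof -
    have "(cmod (cinner (A (S z)) z))\<^sup>2 \<le> nA A (S z) * nA A z" by (rule A_CS[OF A])
    also have "\<dots> \<le> c" using c(2)[of z] z by simp
    finally have 1: "(cmod (cinner (A (S z)) z))\<^sup>2 \<le> c" .
    have "(nA A (S z))\<^sup>2 \<le> c\<^sup>2" using c(2)[of z] z nA_nonneg[OF A, of "S z"]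
      by (intro power_mono) auto
    then show ?thesis using 1 unfolding FS_def by simp
  qed
  then show ?thesis using that[of "sqrt (c + c\<^sup>2)"] c by simp
qed

lemma FS_scale:
  assumes A: "positive_op A" and S: "B_A A S" and "a \<ge> 0"
  shows "FS A S (sqrt a *\<^sub>R u) = a * FS A S u"
proof -
  have "FS A S (sqrt a *\<^sub>R u) = sqrt ((a * cmod (cinner (A (S u)) u))\<^sup>2 + (a * nA A (S u))\<^sup>2)"
    unfolding FS_def using assms(3)
    by (simp add: lin_facts[OF A S] norm_mult)
  also have "\<dots> = sqrt (a\<^sup>2 * ((cmod (cinner (A (S u)) u))\<^sup>2 + (nA A (S u))\<^sup>2))"
    by (simp only: power_mult_distrib distrib_left)
  also have "\<dots> = a * FS A S u" unfolding FS_def using assms(3) by (simp add: real_sqrt_mult)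
  finally show ?thesis .
qed

lemma FS_le:
  assumes A: "positive_op A" and S: "B_A A S"
    and bd: "\<And>u. nA A u = 1 \<Longrightarrow> FS A S u \<le> m" and m: "m \<ge> 0"
  shows "FS A S x \<le> nA A x * m"
proof (cases "nA A x = 0")
  case True
  obtain c where c: "c \<ge> 0" "\<And>x. nA A (S x) \<le> c * nA A x"
    using A_bounded[OF A S] by blast
  have "nA A (S x) = 0" using c(2)[of x] True nA_nonneg[OF A, of "S x"] by simp
  moreover have "cinner (A (S x)) x = 0"
    using A_CS[OF A, of "S x" x] True by simp
  ultimately show ?thesis unfolding FS_def using True by simp
next
  case False
  define a where "a = nA A x"
  have a: "a > 0" using False nA_nonneg[OF A, of x] by (simp add: a_def)
  define u where "u = (1 / sqrt a) *\<^sub>R x"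
  have xu: "x = sqrt a *\<^sub>R u" unfolding u_def using a by simp
  have "nA A u = 1" unfolding u_def using a by (simp add: lin_facts[OF A S] a_def power_divide)
  then have "FS A S u \<le> m" by (rule bd)
  then have "a * FS A S u \<le> a * m" using a by simp
  moreover have "FS A S x = a * FS A S u" using FS_scale[OF A S, of a u] a by (simp add: xu[symmetric])
  ultimately have "FS A S x \<le> a * m" by simp
  then show ?thesis by (simp add: a_def mult.commute)
qed

lemma GS_le:
  assumes A: "positive_op A" and S: "B_A A S" and T: "B_A A T"
  shows "GS A S T p \<le> FS A S (fst p) + FS A T (snd p)"
proof -
  define P where "P = cinner (A (S (fst p))) (fst p)"
  define P' where "P' = cinner (A (T (snd p))) (snd p)"
  define Q where "Q = nA A (S (fst p))"
  define Q' where "Q' = nA A (T (snd p))"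
  have Q: "Q \<ge> 0" "Q' \<ge> 0" unfolding Q_def Q'_def by (auto intro: nA_nonneg[OF A])
  have "(cmod (P + P'))\<^sup>2 \<le> (cmod P + cmod P')\<^sup>2"
    by (intro power_mono norm_triangle_ineq) simp
  then have "GS A S T p \<le> sqrt ((cmod P + cmod P')\<^sup>2 + (Q + Q')\<^sup>2)"
    unfolding GS_def P_def P'_def Q_def Q'_def by simp
  also have "\<dots> = cmod (Complex (cmod P) Q + Complex (cmod P') Q')"
    by (simp add: cmod_def)
  also have "\<dots> \<le> cmod (Complex (cmod P) Q) + cmod (Complex (cmod P') Q')"
    by (rule norm_triangle_ineq)
  also have "\<dots> = FS A S (fst p) + FS A T (snd p)"
    by (simp add: cmod_def FS_def P_def P'_def Q_def Q'_def)
  finally show ?thesis .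
qed

theorem main:
  fixes A S T :: "'a::complex_hilbert \<Rightarrow> 'a"
  assumes A: "positive_op A"
    and S: "B_A A S"
    and T: "B_A A T"
  shows "dw_A0 A (diag_op S T) = max (dw_A A S) (dw_A A T)"
proof -
  define U where "U = {z. nA A z = 1}"
  define D where "D = {p. nA A (fst p) + nA A (snd p) = 1}"
  have eqs: "dw_A A S = Sup (FS A S ` U)" "dw_A A T = Sup (FS A T ` U)"
    "dw_A0 A (diag_op S T) = Sup (GS A S T ` D)"
    using dwA_eq[OF A] dwA0_eq[OF A] by (auto simp: U_def D_def)
  have S0: "S 0 = 0" and T0: "T 0 = 0" using lin_facts[OF A S] lin_facts[OF A T] by auto
  have A0': "A 0 = 0" using A by (auto simp: positive_op_def bounded_clinear_def intro: linear_simps)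
  have nA0: "nA A 0 = 0" by (simp add: nA_def A0')
  show ?thesis
  proof (cases "U = {}")
    case True
    have z: "nA A z = 0" for z
    proof (rule ccontr)
      assume "nA A z \<noteq> 0"
      then have a: "nA A z > 0" using nA_nonneg[OF A, of z] by simp
      have "nA A ((1 / sqrt (nA A z)) *\<^sub>R z) = 1"
        using a by (simp add: lin_facts[OF A S] power_divide)
      then show False using True by (auto simp: U_def)
    qed
    have "D = {}" using z by (auto simp: D_def)
    then show ?thesis using True eqs by simp
  next
    case False
    obtain cS where cS: "\<And>z. nA A z = 1 \<Longrightarrow> FS A S z \<le> cS" using FS_bound[OF A S] by blast
    obtain cT where cT: "\<And>z. nA A z = 1 \<Longrightarrow> FS A T z \<le> cT" using FS_bound[OF A T] by blast
    have bS: "bdd_above (FS A S ` U)" using cS by (auto simp: U_def bdd_above_def)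
    have bT: "bdd_above (FS A T ` U)" using cT by (auto simp: U_def bdd_above_def)
    define m where "m = max (Sup (FS A S ` U)) (Sup (FS A T ` U))"
    obtain z0 where z0: "z0 \<in> U" using False by blast
    have "0 \<le> FS A S z0" by (simp add: FS_def)
    also have "\<dots> \<le> Sup (FS A S ` U)" using bS z0 by (intro cSup_upper) auto
    finally have m0: "m \<ge> 0" by (simp add: m_def)
    have uS: "FS A S u \<le> m" if "nA A u = 1" for u
    proof -
      have "FS A S u \<le> Sup (FS A S ` U)" using bS that by (intro cSup_upper) (auto simp: U_def)
      then show ?thesis by (simp add: m_def)
    qed
    have uT: "FS A T u \<le> m" if "nA A u = 1" for u
    proof -
      have "FS A T u \<le> Sup (FS A T ` U)" using bT that by (intro cSup_upper) (auto simp: U_def)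
      then show ?thesis by (simp add: m_def)
    qed
    have Gm: "GS A S T p \<le> m" if "p \<in> D" for p
    proof -
      have "GS A S T p \<le> FS A S (fst p) + FS A T (snd p)" by (rule GS_le[OF A S T])
      also have "\<dots> \<le> nA A (fst p) * m + nA A (snd p) * m"
        using FS_le[OF A S uS m0, of "fst p"] FS_le[OF A T uT m0, of "snd p"] by simp
      also have "\<dots> = m" using that by (simp add: D_def distrib_right[symmetric])
      finally show ?thesis .
    qed
    have Dne: "(z0, 0) \<in> D" using z0 nA0 by (simp add: D_def U_def)
    have bG: "bdd_above (GS A S T ` D)" by (rule bdd_aboveI2[of _ _ m]) (rule Gm)
    have le1: "Sup (GS A S T ` D) \<le> m" using Gm Dne by (intro cSup_least) auto
    have GS1: "GS A S T (z, 0) = FS A S z" for z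
      by (simp add: GS_def FS_def T0 A0' nA0)
    have GS2: "GS A S T (0, z) = FS A T z" for z
      by (simp add: GS_def FS_def S0 A0' nA0)
    have "Sup (FS A S ` U) \<le> Sup (GS A S T ` D)"
    proof (rule cSup_least)
      show "FS A S ` U \<noteq> {}" using z0 by blast
      fix v assume "v \<in> FS A S ` U"
      then obtain z where z: "z \<in> U" "v = FS A S z" by blast
      have "(z, 0) \<in> D" using z nA0 by (simp add: D_def U_def)
      then have "GS A S T (z, 0) \<le> Sup (GS A S T ` D)" using bG by (intro cSup_upper) auto
      then show "v \<le> Sup (GS A S T ` D)" using z GS1 by simp
    qed
    moreover have "Sup (FS A T ` U) \<le> Sup (GS A S T ` D)"
    proof (rule cSup_least)
      show "FS A T ` U \<noteq> {}" using z0 by blast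
      fix v assume "v \<in> FS A T ` U"
      then obtain z where z: "z \<in> U" "v = FS A T z" by blast
      have "(0, z) \<in> D" using z nA0 by (simp add: D_def U_def)
      then have "GS A S T (0, z) \<le> Sup (GS A S T ` D)" using bG by (intro cSup_upper) auto
      then show "v \<le> Sup (GS A S T ` D)" using z GS2 by simp
    qed
    ultimately show ?thesis using le1 eqs by (simp add: m_def)
  qed
qed


theorem proposition3p4:
  fixes A S T :: "'a::complex_hilbert \<Rightarrow> 'a"
  assumes "positive_op A"
    and "B_A A S"
    and "B_A A T"
  shows "dw_A0 A (diag_op S T) = max (dw_A A S) (dw_A A T)"
  using main[OF assms] .

end
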